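(* Let $P$ be a positive event pattern and $I$ an event stream, and let $G=(V,\mathcal{E})$ be the GRETA graph of $P$ and $I$. Call a vertex a START vertex if its type is $start(P)$ and an END vertex if its type is $end(P)$. Then the set of event sequences $(v_0,v_1,\dots,v_m)$ ($m \ge 0$) that form directed paths in $G$ from a START vertex $v_0$ to an END vertex $v_m$ is equal to the set of event trends matched by $P$ in $I$; that is, for each such path there is a trend consisting of the same events in the same order, and vice versa.
   Context: Events: each event $e$ has an event type $e.type$ and an occurrence time $e.time \in \mathbb{Q}_{\ge 0}$. An event stream $I$ is a finite collection of distinct events arriving in nondecreasing order of time. Positive patterns: an event type $E$ is a pattern; if $P_i,P_j$ are patterns then $P_i+$ and $\mathsf{SEQ}(P_i,P_j)$ are patterns; each event type occurs at most once in a pattern. Matches over $I$: $matches(E)=\{(e): e\in I, e.type=E\}$; $(e_1,\dots,e_k)\in matches(\mathsf{SEQ}(P_i,P_j))$ iff for some $1\le m\le k$, $(e_1,\dots,e_m)\in matches(P_i)$, $(e_{m+1},\dots,e_k)\in matches(P_j)$ and $e_1.time<e_2.time<\dots<e_k.time$; $matches(P_i+)$ consists of concatenations $s_1\cdots s_k$ ($k\ge1$) with each $s_l\in matches(P_i)$ and the last event of $s_l$ strictly earlier than the first event of $s_{l+1}$. The event trends matched by $P$ in $I$ are the elements of $matches(P)$. Define $start(E)=end(E)=E$, $start(P_i+)=start(P_i)$, $end(P_i+)=end(P_i)$, $start(\mathsf{SEQ}(P_i,P_j))=start(P_i)$, $end(\mathsf{SEQ}(P_i,P_j))=end(P_j)$.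 The GRETA graph $G=(V,\mathcal{E})$ of $P$ and $I$ is the directed graph whose vertices are the events of $I$ that occur in at least one trend matched by $P$ in $I$, with an edge $(e_i,e_j)$ iff $e_i$ and $e_j$ are consecutive (adjacent) events, in this order, in some trend matched by $P$ in $I$. A path may consist of a single vertex. *)

theory Defs
  imports Main "HOL.Rat"
begin

text \<open>Events are abstract elements of type 'e; each event has a type (etype) and an
 occurrence time (etime). An event stream is a finite set of (distinct) events.
 A trend is represented by the list of its events.\<close>

datatype 't pattern = Ev 't | Plus "'t pattern" | Seq "'t pattern" "'t pattern"

fun types :: "'t pattern \<Rightarrow> 't list" where
  "types (Ev E) = [E]"
| "types (Plus P) = types P"
| "types (Seq P Q) = types P @ types Q"

text \<open>Positive pattern: each event type occurs at most once.\<close>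
definition wf_pattern :: "'t pattern \<Rightarrow> bool" where
  "wf_pattern P \<longleftrightarrow> distinct (types P)"

fun start :: "'t pattern \<Rightarrow> 't" where
  "start (Ev E) = E"
| "start (Plus P) = start P"
| "start (Seq P Q) = start P"

fun "end" :: "'t pattern \<Rightarrow> 't" where
  "end (Ev E) = E"
| "end (Plus P) = end P"
| "end (Seq P Q) = end Q"

fun matches :: "('e \<Rightarrow> 't) \<Rightarrow> ('e \<Rightarrow> rat) \<Rightarrow> 'e set \<Rightarrow> 't pattern \<Rightarrow> 'e list set" where
  "matches ty tm I (Ev E) = {[e] | e. e \<in> I \<and> ty e = E}"
| "matches ty tm I (Seq P Q) =
     {s1 @ s2 | s1 s2. s1 \<in> matches ty tm I P \<and> s2 \<in> matches ty tm I Q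
        \<and> sorted_wrt (<) (map tm (s1 @ s2))}"
| "matches ty tm I (Plus P) =
     {concat ss | ss. ss \<noteq> [] \<and> (\<forall>s \<in> set ss. s \<in> matches ty tm I P)
        \<and> (\<forall>l. Suc l < length ss \<longrightarrow> tm (last (ss ! l)) < tm (hd (ss ! Suc l)))}"

definition greta_V :: "('e \<Rightarrow> 't) \<Rightarrow> ('e \<Rightarrow> rat) \<Rightarrow> 'e set \<Rightarrow> 't pattern \<Rightarrow> 'e set" where
  "greta_V ty tm I P = {e. \<exists>tr \<in> matches ty tm I P. e \<in> set tr}"

definition greta_E :: "('e \<Rightarrow> 't) \<Rightarrow> ('e \<Rightarrow> rat) \<Rightarrow> 'e set \<Rightarrow> 't pattern \<Rightarrow> ('e \<times> 'e) set" where
  "greta_E ty tm I P = {(a, b). \<exists>tr \<in> matches ty tm I P. \<exists>i. Suc i < length tr \<and> tr ! i = a \<and> tr ! Suc i = b}"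

definition is_path :: "'e set \<Rightarrow> ('e \<times> 'e) set \<Rightarrow> 'e list \<Rightarrow> bool" where
  "is_path V E vs \<longleftrightarrow> vs \<noteq> [] \<and> set vs \<subseteq> V \<and>
     (\<forall>i. Suc i < length vs \<longrightarrow> (vs ! i, vs ! Suc i) \<in> E)"

end

theory Submission
  imports Defs
begin

fun fol :: "'t pattern \<Rightarrow> ('t \<times> 't) set" where
  "fol (Ev E) = {}"
| "fol (Plus P) = fol P \<union> {(end P, start P)}"
| "fol (Seq P Q) = fol P \<union> fol Q \<union> {(end P, start Q)}"

definition loc :: "('e \<Rightarrow> 't) \<Rightarrow> ('e \<Rightarrow> rat) \<Rightarrow> 'e set \<Rightarrow> ('t \<times> 't) set \<Rightarrow> 't \<Rightarrow> 't \<Rightarrow> 'e list \<Rightarrow> bool" where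
  "loc ty tm I F s e xs \<longleftrightarrow> xs \<noteq> [] \<and> set xs \<subseteq> I
     \<and> successively (\<lambda>a b. tm a < tm b \<and> (ty a, ty b) \<in> F) xs
     \<and> ty (hd xs) = s \<and> ty (last xs) = e"

lemma start_in: "start P \<in> set (types P)"
  by (induction P) auto
lemma end_in: "end P \<in> set (types P)"
  by (induction P) auto
lemma fol_in: "fol P \<subseteq> set (types P) \<times> set (types P)"
  using start_in end_in by (induction P) fastforce+

lemma sorted_succ: "sorted_wrt (<) (map (tm::'e \<Rightarrow> rat) xs) \<longleftrightarrow> successively (\<lambda>a b. tm a < tm b) xs"
proof -
  have "transp ((<) :: rat \<Rightarrow> rat \<Rightarrow> bool)" by (auto simp: transp_def)
  then show ?thesis
    by (simp add: successively_conv_sorted_wrt[symmetric] successively_map)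
qed

lemma closure_fw:
  assumes "successively R xs" "xs \<noteq> []" "Q (hd xs)" "\<And>a b. R a b \<Longrightarrow> Q a \<Longrightarrow> Q b"
  shows "\<forall>x \<in> set xs. Q x"
  using assms
proof (induction xs)
  case Nil then show ?case by simp
next
  case (Cons x xs)
  show ?case
  proof (cases xs)
    case Nil then show ?thesis using Cons by simp
  next
    case (Cons y ys)
    with Cons.prems have "R x y" "successively R xs" by auto
    then have "Q y" using Cons.prems \<open>xs = y # ys\<close> by auto
    then have "\<forall>x \<in> set xs. Q x" using Cons.IH \<open>successively R xs\<close> \<open>xs = y # ys\<close> Cons.prems(4) by auto
    then show ?thesis using Cons.prems by auto
  qed
qed

definition pcond :: "('e \<Rightarrow> rat) \<Rightarrow> 'e list list \<Rightarrow> bool" where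
  "pcond tm ss \<longleftrightarrow> (\<forall>l. Suc l < length ss \<longrightarrow> tm (last (ss ! l)) < tm (hd (ss ! Suc l)))"

lemma pcond_Cons: "pcond tm (y # ss) \<longleftrightarrow> (ss \<noteq> [] \<longrightarrow> tm (last y) < tm (hd (hd ss))) \<and> pcond tm ss"
  unfolding pcond_def
  apply (cases ss)
   apply simp
  apply (auto simp: nth_Cons split: nat.splits)
  done

lemma main:
  assumes "wf_pattern P"
  shows "matches ty tm I P = {xs. loc ty tm I (fol P) (start P) (end P) xs}"
  using assms
proof (induction P)
  case (Ev E)
  show ?case
  proof (intro set_eqI iffI)
    fix xs assume "xs \<in> matches ty tm I (Ev E)"
    then show "xs \<in> {xs. loc ty tm I (fol (Ev E)) (start (Ev E)) (end (Ev E)) xs}"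
      by (auto simp: loc_def)
  next
    fix xs assume "xs \<in> {xs. loc ty tm I (fol (Ev E)) (start (Ev E)) (end (Ev E)) xs}"
    then have L: "loc ty tm I {} E E xs" by simp
    then obtain x ys where xs: "xs = x # ys" unfolding loc_def by (cases xs) auto
    have "ys = []" using L xs by (cases ys) (auto simp: loc_def)
    then show "xs \<in> matches ty tm I (Ev E)" using L xs by (auto simp: loc_def)
  qed
next
  case (Seq P Q)
  have wP: "wf_pattern P" and wQ: "wf_pattern Q" and dj: "set (types P) \<inter> set (types Q) = {}"
    using Seq.prems by (auto simp: wf_pattern_def)
  note IHP = Seq.IH(1)[OF wP] and IHQ = Seq.IH(2)[OF wQ]
  let ?R = "\<lambda>F a b. tm a < tm b \<and> (ty a, ty b) \<in> F"
  show ?case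
  proof (intro set_eqI iffI)
    fix xs assume "xs \<in> matches ty tm I (Seq P Q)"
    then obtain s1 s2 where xs: "xs = s1 @ s2" and l1: "loc ty tm I (fol P) (start P) (end P) s1"
      and l2: "loc ty tm I (fol Q) (start Q) (end Q) s2" and so: "sorted_wrt (<) (map tm (s1 @ s2))"
      using IHP IHQ by auto
    have st: "successively (\<lambda>a b. tm a < tm b) (s1 @ s2)" using so sorted_succ by blast
    have "successively (?R (fol (Seq P Q))) s1"
      using l1 unfolding loc_def by (auto elim: successively_mono)
    moreover have "successively (?R (fol (Seq P Q))) s2"
      using l2 unfolding loc_def by (auto elim: successively_mono)
    moreover have "tm (last s1) < tm (hd s2)"
      using st l1 l2 by (auto simp: successively_append_iff loc_def)
    ultimately have "successively (?R (fol (Seq P Q))) xs"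
      using l1 l2 xs by (auto simp: successively_append_iff loc_def)
    then show "xs \<in> {xs. loc ty tm I (fol (Seq P Q)) (start (Seq P Q)) (end (Seq P Q)) xs}"
      using l1 l2 xs by (auto simp: loc_def)
  next
    fix xs assume "xs \<in> {xs. loc ty tm I (fol (Seq P Q)) (start (Seq P Q)) (end (Seq P Q)) xs}"
    then have L: "loc ty tm I (fol (Seq P Q)) (start P) (end Q) xs" by simp
    have sP: "start P \<in> set (types P)" and eP: "end P \<in> set (types P)"
      and sQ: "start Q \<in> set (types Q)" and eQ: "end Q \<in> set (types Q)"
      using start_in end_in by auto
    have fP: "fol P \<subseteq> set (types P) \<times> set (types P)" and fQ: "fol Q \<subseteq> set (types Q) \<times> set (types Q)"
      using fol_in by auto
    define TQ where "TQ = set (types Q)"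
    define s1 where "s1 = takeWhile (\<lambda>e. ty e \<notin> TQ) xs"
    define s2 where "s2 = dropWhile (\<lambda>e. ty e \<notin> TQ) xs"
    have xs: "xs = s1 @ s2" unfolding s1_def s2_def by simp
    have ne: "xs \<noteq> []" using L by (simp add: loc_def)
    have s1ne: "s1 \<noteq> []"
      using L ne sP dj unfolding s1_def TQ_def loc_def by (cases xs) auto
    have s2ne: "s2 \<noteq> []"
    proof
      assume "s2 = []"
      then have "\<forall>e \<in> set xs. ty e \<notin> TQ" unfolding s2_def by simp
      moreover have "last xs \<in> set xs" using ne by simp
      moreover have "ty (last xs) = end Q" using L by (simp add: loc_def)
      ultimately show False using eQ unfolding TQ_def by metis
    qed
    have s1T: "\<forall>e \<in> set s1. ty e \<notin> TQ" unfolding s1_def by (auto dest: set_takeWhileD)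
    have hd2: "ty (hd s2) \<in> TQ" unfolding s2_def using s2ne s2_def hd_dropWhile by metis
    have succ: "successively (?R (fol (Seq P Q))) xs" using L by (simp add: loc_def)
    then have sc1: "successively (?R (fol (Seq P Q))) s1" and sc2: "successively (?R (fol (Seq P Q))) s2"
      and bd: "?R (fol (Seq P Q)) (last s1) (hd s2)"
      using xs s1ne s2ne by (auto simp: successively_append_iff)
    have s2T: "\<forall>e \<in> set s2. ty e \<in> TQ"
    proof (rule closure_fw[OF sc2 s2ne, of "\<lambda>e. ty e \<in> TQ"])
      show "ty (hd s2) \<in> TQ" by (rule hd2)
      fix a b assume "?R (fol (Seq P Q)) a b" "ty a \<in> TQ"
      then show "ty b \<in> TQ" using fP fQ dj eP unfolding TQ_def by auto
    qed
    have c1: "successively (?R (fol P)) s1"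
    proof (rule successively_mono[OF sc1])
      fix a b assume "a \<in> set s1" "b \<in> set s1" "?R (fol (Seq P Q)) a b"
      then show "?R (fol P) a b" using s1T fQ sQ unfolding TQ_def by auto
    qed
    have c2: "successively (?R (fol Q)) s2"
    proof (rule successively_mono[OF sc2])
      fix a b assume "a \<in> set s2" "b \<in> set s2" "?R (fol (Seq P Q)) a b"
      moreover have "ty a \<in> TQ" "ty b \<in> TQ" using s2T \<open>a \<in> set s2\<close> \<open>b \<in> set s2\<close> by auto
      ultimately show "?R (fol Q) a b" using fP eP dj unfolding TQ_def by auto
    qed
    have lastb: "(ty (last s1), ty (hd s2)) = (end P, start Q)"
      using bd s1T s1ne hd2 fP fQ dj unfolding TQ_def by auto
    have l1: "loc ty tm I (fol P) (start P) (end P) s1"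
      using L c1 lastb s1ne xs unfolding loc_def by auto
    have l2: "loc ty tm I (fol Q) (start Q) (end Q) s2"
      using L c2 lastb s2ne xs unfolding loc_def by auto
    have "successively (\<lambda>a b. tm a < tm b) xs"
      using succ by (auto elim: successively_mono)
    then have "sorted_wrt (<) (map tm (s1 @ s2))" using xs sorted_succ by metis
    then show "xs \<in> matches ty tm I (Seq P Q)"
      using l1 l2 xs IHP IHQ by auto
  qed
next
  case (Plus P)
  have wP: "wf_pattern P" using Plus.prems by (simp add: wf_pattern_def)
  note IHP = Plus.IH[OF wP]
  let ?R = "\<lambda>F a b. tm a < tm b \<and> (ty a, ty b) \<in> F"
  let ?L = "loc ty tm I (fol P) (start P) (end P)"
  let ?LP = "loc ty tm I (fol (Plus P)) (start P) (end P)"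
  show ?case
  proof (intro set_eqI iffI)
    fix xs assume "xs \<in> matches ty tm I (Plus P)"
    then obtain ss where xs: "xs = concat ss" and ne: "ss \<noteq> []" and all: "\<forall>s\<in>set ss. ?L s"
      and pc: "pcond tm ss"
      using IHP unfolding pcond_def by auto
    have "?LP (concat ss)" using ne all pc
    proof (induction ss)
      case Nil then show ?case by simp
    next
      case (Cons y ss)
      have ly: "?L y" using Cons.prems by simp
      have ly': "?LP y" using ly unfolding loc_def by (auto elim: successively_mono)
      show ?case
      proof (cases "ss = []")
        case True then show ?thesis using ly' by simp
      next
        case False
        have lc: "?LP (concat ss)" using Cons.IH False Cons.prems pcond_Cons by auto
        have hne: "hd ss \<noteq> []" using False Cons.prems(2) unfolding loc_def by (cases ss) auto
        have hc: "hd (concat ss) = hd (hd ss)" using False hne by (cases ss) auto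
        have t: "tm (last y) < tm (hd (hd ss))" using Cons.prems(3) False pcond_Cons by blast
        have cne: "concat ss \<noteq> []" using lc loc_def by metis
        show ?thesis using ly' lc t hc cne ly
          by (auto simp: loc_def successively_append_iff)
      qed
    qed
    then show "xs \<in> {xs. loc ty tm I (fol (Plus P)) (start (Plus P)) (end (Plus P)) xs}"
      using xs by simp
  next
    fix xs assume "xs \<in> {xs. loc ty tm I (fol (Plus P)) (start (Plus P)) (end (Plus P)) xs}"
    then have L: "?LP xs" by simp
    have gen: "\<exists>y ss. xs = y @ concat ss \<and> y \<noteq> [] \<and> successively (?R (fol P)) y
       \<and> ty (last y) = end P \<and> (\<forall>s\<in>set ss. ?L s) \<and> pcond tm ss
       \<and> (ss \<noteq> [] \<longrightarrow> tm (last y) < tm (hd (hd ss)))"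
      if "xs \<noteq> []" "successively (?R (fol (Plus P))) xs" "ty (last xs) = end P" "set xs \<subseteq> I"
      for xs using that
    proof (induction xs)
      case Nil then show ?case by simp
    next
      case (Cons x xs)
      show ?case
      proof (cases "xs = []")
        case True
        then show ?thesis using Cons.prems by (intro exI[of _ "[x]"] exI[of _ "[]"]) (auto simp: pcond_def)
      next
        case False
        have rx: "?R (fol (Plus P)) x (hd xs)" and sx: "successively (?R (fol (Plus P))) xs"
          using Cons.prems(2) False by (auto simp: successively_Cons)
        obtain y ss where xs: "xs = y @ concat ss" and yne: "y \<noteq> []" and sy: "successively (?R (fol P)) y"
          and ly: "ty (last y) = end P" and all: "\<forall>s\<in>set ss. ?L s" and pc: "pcond tm ss"
          and bd: "ss \<noteq> [] \<longrightarrow> tm (last y) < tm (hd (hd ss))"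
          using Cons.IH[OF False sx] Cons.prems False by auto
        have hx: "hd xs = hd y" using xs yne by simp
        show ?thesis
        proof (cases "(ty x, ty (hd y)) \<in> fol P")
          case True
          show ?thesis
            apply (rule exI[of _ "x # y"], rule exI[of _ ss])
            using True rx hx sy yne ly all pc bd xs by (auto simp: successively_Cons)
        next
          case False
          then have tt: "ty x = end P" "ty (hd y) = start P" using rx hx by auto
          have "set y \<subseteq> I" using Cons.prems(4) xs by auto
          then have "?L y" using tt sy yne ly unfolding loc_def by auto
          then show ?thesis
            apply (intro exI[of _ "[x]"] exI[of _ "y # ss"])
            using tt rx hx all pc bd xs by (auto simp: pcond_Cons)
        qed
      qed
    qed
    obtain y ss where xs: "xs = y @ concat ss" and yne: "y \<noteq> []" and sy: "successively (?R (fol P)) y"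
          and ly: "ty (last y) = end P" and all: "\<forall>s\<in>set ss. ?L s" and pc: "pcond tm ss"
          and bd: "ss \<noteq> [] \<longrightarrow> tm (last y) < tm (hd (hd ss))"
      using gen L unfolding loc_def by blast
    have "?L y" using L xs yne sy ly unfolding loc_def by auto
    then have "xs = concat (y # ss) \<and> y # ss \<noteq> [] \<and> (\<forall>s\<in>set (y # ss). s \<in> matches ty tm I P) \<and> pcond tm (y # ss)"
      using xs all pc bd IHP by (auto simp: pcond_Cons)
    then show "xs \<in> matches ty tm I (Plus P)"
      unfolding pcond_def by (simp only: matches.simps) blast
  qed
qed

theorem theorem2:
  fixes ty :: "'e \<Rightarrow> 't" and tm :: "'e \<Rightarrow> rat" and I :: "'e set" and P :: "'t pattern"
  assumes "wf_pattern P"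
    and "finite I"
    and "\<forall>e \<in> I. tm e \<ge> 0"
  shows "{vs. is_path (greta_V ty tm I P) (greta_E ty tm I P) vs
              \<and> ty (hd vs) = start P \<and> ty (last vs) = end P}
         = matches ty tm I P"
proof -
  note M = main[OF assms(1), of ty tm I]
  let ?R = "\<lambda>a b. tm a < tm b \<and> (ty a, ty b) \<in> fol P"
  show ?thesis
  proof (intro set_eqI iffI)
    fix vs assume "vs \<in> {vs. is_path (greta_V ty tm I P) (greta_E ty tm I P) vs
              \<and> ty (hd vs) = start P \<and> ty (last vs) = end P}"
    then have p: "is_path (greta_V ty tm I P) (greta_E ty tm I P) vs" and h: "ty (hd vs) = start P"
      and l: "ty (last vs) = end P" by auto
    have "set vs \<subseteq> I"
      using p M unfolding is_path_def greta_V_def loc_def by blast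
    moreover have "successively ?R vs"
      unfolding successively_conv_nth
    proof (intro allI impI)
      fix i assume "Suc i < length vs"
      then have "(vs ! i, vs ! Suc i) \<in> greta_E ty tm I P" using p unfolding is_path_def by blast
      then obtain tr j where "tr \<in> matches ty tm I P" "Suc j < length tr" "tr ! j = vs ! i" "tr ! Suc j = vs ! Suc i"
        unfolding greta_E_def by auto
      then show "?R (vs ! i) (vs ! Suc i)" using M unfolding loc_def
        by (metis (no_types, lifting) mem_Collect_eq successively_nth)
    qed
    ultimately show "vs \<in> matches ty tm I P" using M p h l unfolding is_path_def loc_def by auto
  next
    fix vs assume v: "vs \<in> matches ty tm I P"
    then have "loc ty tm I (fol P) (start P) (end P) vs" using M by auto
    moreover have "set vs \<subseteq> greta_V ty tm I P" using v unfolding greta_V_def by blast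
    moreover have "\<forall>i. Suc i < length vs \<longrightarrow> (vs ! i, vs ! Suc i) \<in> greta_E ty tm I P"
      using v unfolding greta_E_def by blast
    ultimately show "vs \<in> {vs. is_path (greta_V ty tm I P) (greta_E ty tm I P) vs
              \<and> ty (hd vs) = start P \<and> ty (last vs) = end P}"
      unfolding is_path_def loc_def by auto
  qed
qed

end
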